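(* Let $R$ be a commutative ring and $S$ a subset of $R$. Consider: (a) $S$ is coprincipal; (b) there are rings $R_1,R_2$ with $R=R_1\times R_2$ such that $S\cap(R_1)^\times\neq\emptyset$ and $s\cdot(1,0)\in(R_1)^\times$ for all $s\in S$. Then (b) implies (a). If moreover $S$ is multiplicatively closed, then (a) implies (b).
   Context: $S$ is coprincipal if $S\ne\emptyset$ and there exists $s\in S$ with $s\in\bigcap_{r\in S}Rr$. $(R_1)^\times$ denotes the units of $R_1$, and $R_1$ is identified with the subset $R_1\times\{0\}$ of $R$, so $(R_1)^\times=\{(u,0):u \text{ a unit of } R_1\}$. *)

theory Defs
  imports "HOL-Algebra.Algebra"
begin

definition coprincipal :: "('a, 'm) ring_scheme \<Rightarrow> 'a set \<Rightarrow> bool" where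
  "coprincipal R S \<longleftrightarrow> S \<noteq> {} \<and>
     (\<exists>s\<in>S. \<forall>r\<in>S. \<exists>x\<in>carrier R. s = x \<otimes>\<^bsub>R\<^esub> r)"

definition mult_closed :: "('a, 'm) ring_scheme \<Rightarrow> 'a set \<Rightarrow> bool" where
  "mult_closed R S \<longleftrightarrow> (\<forall>a\<in>S. \<forall>b\<in>S. a \<otimes>\<^bsub>R\<^esub> b \<in> S)"

text \<open>Condition (b): R is (isomorphic to) a product R1 x R2 via phi, with R1 identified with
  R1 x {0}; S meets the units of R1, and s(1,0) is a unit of R1 for all s in S.\<close>
definition split_cond :: "('a, 'm) ring_scheme \<Rightarrow> 'a set \<Rightarrow> bool" where
  "split_cond R S \<longleftrightarrow> (\<exists>(R1 :: 'a ring) (R2 :: 'a ring) \<phi>.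
      ring R1 \<and> ring R2 \<and> \<phi> \<in> ring_iso R (RDirProd R1 R2) \<and>
      (\<exists>s\<in>S. \<phi> s \<in> Units R1 \<times> {\<zero>\<^bsub>R2\<^esub>}) \<and>
      (\<forall>s\<in>S. \<phi> s \<otimes>\<^bsub>RDirProd R1 R2\<^esub> (\<one>\<^bsub>R1\<^esub>, \<zero>\<^bsub>R2\<^esub>) \<in> Units R1 \<times> {\<zero>\<^bsub>R2\<^esub>}))"

end

theory Submission
  imports Defs
begin

lemma RDP_mult: "(a, b) \<otimes>\<^bsub>RDirProd R S\<^esub> (c, d) = (a \<otimes>\<^bsub>R\<^esub> c, b \<otimes>\<^bsub>S\<^esub> d)"
  by (simp add: RDirProd_def DirProd_def monoid.defs)


context cring
begin

lemma idem_weak: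
  assumes e: "e \<in> carrier R" "e \<otimes> e = e"
  shows "weak_ring_morphism (\<lambda>a. e \<otimes> a) (PIdl (\<one> \<ominus> e)) R"
proof (rule weak_ring_morphismI)
  show "ideal (PIdl (\<one> \<ominus> e)) R" using e by (intro cgenideal_ideal) simp
  fix a b assume a: "a \<in> carrier R" and b: "b \<in> carrier R"
  show "(e \<otimes> a = e \<otimes> b) = (a \<ominus> b \<in> PIdl (\<one> \<ominus> e))"
  proof
    assume h: "e \<otimes> a = e \<otimes> b"
    have "a \<ominus> b = (a \<ominus> b) \<otimes> (\<one> \<ominus> e)"
    proof -
      have "(a \<ominus> b) \<otimes> (\<one> \<ominus> e) = (a \<ominus> b) \<ominus> (e \<otimes> a \<ominus> e \<otimes> b)"
        using a b e by algebra
      also have "e \<otimes> a \<ominus> e \<otimes> b = \<zero>" using h a b e by (simp add: r_right_minus_eq)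
      also have "(a \<ominus> b) \<ominus> \<zero> = a \<ominus> b" using a b by algebra
      finally show ?thesis by simp
    qed
    thus "a \<ominus> b \<in> PIdl (\<one> \<ominus> e)" unfolding cgenideal_def using a b by blast
  next
    assume "a \<ominus> b \<in> PIdl (\<one> \<ominus> e)"
    then obtain x where x: "x \<in> carrier R" "a \<ominus> b = x \<otimes> (\<one> \<ominus> e)" unfolding cgenideal_def by blast
    have "e \<otimes> (a \<ominus> b) = x \<otimes> (e \<ominus> e \<otimes> e)" proof -
      have "e \<otimes> (x \<otimes> (\<one> \<ominus> e)) = x \<otimes> (e \<ominus> e \<otimes> e)" using x(1) e(1) by algebra
      thus ?thesis by (simp only: x(2))
    qed
    also have "\<dots> = \<zero>" by (metis e(1) e(2) x(1) r_null r_right_minus_eq)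
    finally have "e \<otimes> (a \<ominus> b) = \<zero>" .
    moreover have "e \<otimes> (a \<ominus> b) = e \<otimes> a \<ominus> e \<otimes> b" using a b e by algebra
    ultimately show "e \<otimes> a = e \<otimes> b" using a b e
      by (metis m_closed r_right_minus_eq)
  qed
qed

end

lemma (in cring) a_imp_b:
  assumes SR: "S \<subseteq> carrier R" and mc: "mult_closed R S" and cp: "coprincipal R S"
  shows "split_cond R S"
proof -
  obtain s where s: "s \<in> S" and sd: "\<forall>r\<in>S. \<exists>x\<in>carrier R. s = x \<otimes> r"
    using cp unfolding coprincipal_def by blast
  have sc: "s \<in> carrier R" using s SR by auto
  have "s \<otimes> s \<in> S" using mc s unfolding mult_closed_def by blast
  then obtain x where xc: "x \<in> carrier R" and sx: "s = x \<otimes> (s \<otimes> s)" using sd by blast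
  define e where "e = x \<otimes> s"
  define c where "c = \<one> \<ominus> e"
  have ec: "e \<in> carrier R" using xc sc by (simp add: e_def)
  have cc: "c \<in> carrier R" using ec by (simp add: c_def)
  have es: "e \<otimes> s = s"
  proof -
    have "e \<otimes> s = x \<otimes> (s \<otimes> s)" unfolding e_def using xc sc by algebra
    thus ?thesis using sx by simp
  qed
  have ee: "e \<otimes> e = e"
  proof -
    have "e \<otimes> e = x \<otimes> (e \<otimes> s)" unfolding e_def using xc sc by algebra
    thus ?thesis using es by (simp add: e_def)
  qed
  have ce: "e \<otimes> c = \<zero>"
  proof -
    have "e \<otimes> c = e \<ominus> e \<otimes> e" unfolding c_def using ec by algebra
    thus ?thesis using ee ec by (simp add: r_right_minus_eq)
  qed
  have ec': "c \<otimes> e = \<zero>" using ce ec cc by (simp add: m_comm)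
  have cidem: "c \<otimes> c = c"
  proof -
    have "c \<otimes> c = c \<ominus> e \<otimes> c" unfolding c_def using ec by algebra
    also have "\<dots> = c \<ominus> \<zero>" using ce by simp
    also have "\<dots> = c" using cc by algebra
    finally show ?thesis .
  qed
  have cs: "c \<otimes> s = \<zero>"
  proof -
    have "c \<otimes> s = s \<ominus> e \<otimes> s" unfolding c_def using ec sc by algebra
    thus ?thesis using es sc by (simp add: r_right_minus_eq)
  qed
  define f1 where "f1 = (\<lambda>a. e \<otimes> a)"
  define f2 where "f2 = (\<lambda>a. c \<otimes> a)"
  have w1: "weak_ring_morphism f1 (PIdl (\<one> \<ominus> e)) R" unfolding f1_def using ec ee by (rule idem_weak)
  have w2: "weak_ring_morphism f2 (PIdl (\<one> \<ominus> c)) R" unfolding f2_def using cc cidem by (rule idem_weak)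
  define R1 where "R1 = image_ring f1 R"
  define R2 where "R2 = image_ring f2 R"
  have r1: "ring R1" unfolding R1_def using w1 by (rule image_ring_is_ring)
  have r2: "ring R2" unfolding R2_def using w2 by (rule image_ring_is_ring)
  have h1: "f1 \<in> ring_hom R R1" unfolding R1_def using w1 by (rule weak_ring_morphism_is_hom)
  have h2: "f2 \<in> ring_hom R R2" unfolding R2_def using w2 by (rule weak_ring_morphism_is_hom)
  define \<phi> where "\<phi> = (\<lambda>a. (f1 a, f2 a))"
  have hom: "\<phi> \<in> ring_hom R (RDirProd R1 R2)"
  proof -
    have "(\<lambda>(r, s). (f1 r, f2 s)) \<circ> (\<lambda>a. (a, a)) \<in> ring_hom R (RDirProd R1 R2)"
      by (rule ring_hom_trans[OF RDirProd_hom1 RDirProd_hom3[OF h1 h2]])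
    moreover have "((\<lambda>(r, s). (f1 r, f2 s)) \<circ> (\<lambda>a. (a, a))) = \<phi>" by (auto simp: \<phi>_def)
    ultimately show ?thesis by simp
  qed
  have decomp: "\<And>a. a \<in> carrier R \<Longrightarrow> a = e \<otimes> a \<oplus> c \<otimes> a"
  proof -
    fix a assume a: "a \<in> carrier R"
    show "a = e \<otimes> a \<oplus> c \<otimes> a" using a ec unfolding c_def by algebra
  qed
  have pe: "\<And>a b. a \<in> carrier R \<Longrightarrow> b \<in> carrier R \<Longrightarrow> e \<otimes> (e \<otimes> a \<oplus> c \<otimes> b) = e \<otimes> a"
  proof -
    fix a b assume a: "a \<in> carrier R" and b: "b \<in> carrier R"
    have "e \<otimes> (e \<otimes> a \<oplus> c \<otimes> b) = (e \<otimes> e) \<otimes> a \<oplus> (e \<otimes> c) \<otimes> b" using a b ec cc by algebra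
    thus "e \<otimes> (e \<otimes> a \<oplus> c \<otimes> b) = e \<otimes> a" using ee ce a b ec by simp
  qed
  have pc: "\<And>a b. a \<in> carrier R \<Longrightarrow> b \<in> carrier R \<Longrightarrow> c \<otimes> (e \<otimes> a \<oplus> c \<otimes> b) = c \<otimes> b"
  proof -
    fix a b assume a: "a \<in> carrier R" and b: "b \<in> carrier R"
    have "c \<otimes> (e \<otimes> a \<oplus> c \<otimes> b) = (c \<otimes> e) \<otimes> a \<oplus> (c \<otimes> c) \<otimes> b" using a b ec cc by algebra
    thus "c \<otimes> (e \<otimes> a \<oplus> c \<otimes> b) = c \<otimes> b" using cidem ec' a b cc by simp
  qed
  have bij: "bij_betw \<phi> (carrier R) (carrier (RDirProd R1 R2))"
    unfolding bij_betw_def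
  proof
    show "inj_on \<phi> (carrier R)"
    proof (rule inj_onI)
      fix a b assume a: "a \<in> carrier R" and b: "b \<in> carrier R" and h: "\<phi> a = \<phi> b"
      hence "e \<otimes> a = e \<otimes> b" "c \<otimes> a = c \<otimes> b" by (auto simp: \<phi>_def f1_def f2_def)
      thus "a = b" using decomp[OF a] decomp[OF b] by simp
    qed
    show "\<phi> ` carrier R = carrier (RDirProd R1 R2)"
    proof
      show "\<phi> ` carrier R \<subseteq> carrier (RDirProd R1 R2)"
        by (auto simp: \<phi>_def RDirProd_carrier R1_def R2_def image_ring_carrier)
      show "carrier (RDirProd R1 R2) \<subseteq> \<phi> ` carrier R"
      proof
        fix p assume "p \<in> carrier (RDirProd R1 R2)"
        then obtain a b where a: "a \<in> carrier R" and b: "b \<in> carrier R" and p: "p = (f1 a, f2 b)"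
          by (auto simp: RDirProd_carrier R1_def R2_def image_ring_carrier)
        have "\<phi> (e \<otimes> a \<oplus> c \<otimes> b) = p" using pe[OF a b] pc[OF a b] by (simp add: \<phi>_def f1_def f2_def p)
        moreover have "e \<otimes> a \<oplus> c \<otimes> b \<in> carrier R" using a b ec cc by simp
        ultimately show "p \<in> \<phi> ` carrier R" by blast
      qed
    qed
  qed
  have one1: "\<one>\<^bsub>R1\<^esub> = e" unfolding R1_def image_ring_one f1_def using ec by simp
  have zero2: "\<zero>\<^bsub>R2\<^esub> = \<zero>" unfolding R2_def image_ring_zero f2_def using cc by simp
  have unit1: "\<And>a b. a \<in> carrier R \<Longrightarrow> b \<in> carrier R \<Longrightarrow> e \<otimes> (a \<otimes> b) = e \<Longrightarrow> f1 a \<in> Units R1"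
  proof -
    fix a b assume a: "a \<in> carrier R" and b: "b \<in> carrier R" and h: "e \<otimes> (a \<otimes> b) = e"
    have m1: "f1 b \<otimes>\<^bsub>R1\<^esub> f1 a = f1 (b \<otimes> a)" using ring_hom_mult[OF h1 b a] by simp
    have m2: "f1 a \<otimes>\<^bsub>R1\<^esub> f1 b = f1 (a \<otimes> b)" using ring_hom_mult[OF h1 a b] by simp
    have "f1 (b \<otimes> a) = e" "f1 (a \<otimes> b) = e" using h a b by (auto simp: f1_def m_comm)
    moreover have "f1 a \<in> carrier R1" "f1 b \<in> carrier R1"
      using a b by (auto simp: R1_def image_ring_carrier)
    ultimately show "f1 a \<in> Units R1" unfolding Units_def using m1 m2 one1 by auto
  qed
  have ex: "\<exists>s\<in>S. \<phi> s \<in> Units R1 \<times> {\<zero>\<^bsub>R2\<^esub>}"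
  proof
    show "s \<in> S" by fact
    have "e \<otimes> (s \<otimes> x) = x \<otimes> (x \<otimes> (s \<otimes> s))" unfolding e_def using xc sc by algebra
    also have "\<dots> = e" using sx by (simp add: e_def)
    finally have "f1 s \<in> Units R1" using unit1[OF sc xc] by simp
    moreover have "f2 s = \<zero>\<^bsub>R2\<^esub>" using cs zero2 by (simp add: f2_def)
    ultimately show "\<phi> s \<in> Units R1 \<times> {\<zero>\<^bsub>R2\<^esub>}" by (simp add: \<phi>_def)
  qed
  have all: "\<forall>r\<in>S. \<phi> r \<otimes>\<^bsub>RDirProd R1 R2\<^esub> (\<one>\<^bsub>R1\<^esub>, \<zero>\<^bsub>R2\<^esub>) \<in> Units R1 \<times> {\<zero>\<^bsub>R2\<^esub>}"
  proof
    fix r assume r: "r \<in> S"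
    have rc: "r \<in> carrier R" using r SR by auto
    obtain y where yc: "y \<in> carrier R" and sy: "s = y \<otimes> r" using sd r by blast
    have "e \<otimes> (r \<otimes> (x \<otimes> y)) = e \<otimes> (x \<otimes> (y \<otimes> r))" using rc xc yc ec by algebra
    also have "\<dots> = e" using sy ee by (simp add: e_def)
    finally have u: "f1 r \<in> Units R1" using unit1[OF rc, of "x \<otimes> y"] xc yc by simp
    have "\<phi> r \<otimes>\<^bsub>RDirProd R1 R2\<^esub> (\<one>\<^bsub>R1\<^esub>, \<zero>\<^bsub>R2\<^esub>) = (f1 r \<otimes>\<^bsub>R1\<^esub> f1 \<one>, f2 r \<otimes>\<^bsub>R2\<^esub> f2 \<zero>)"
      unfolding R1_def R2_def image_ring_one image_ring_zero by (simp add: \<phi>_def RDP_mult R1_def R2_def)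
    also have "\<dots> = (f1 r, \<zero>\<^bsub>R2\<^esub>)"
      using ring_hom_mult[OF h1 rc one_closed, symmetric] ring_hom_mult[OF h2 rc zero_closed, symmetric] rc
      zero2 cc by (simp add: f2_def)
    finally show "\<phi> r \<otimes>\<^bsub>RDirProd R1 R2\<^esub> (\<one>\<^bsub>R1\<^esub>, \<zero>\<^bsub>R2\<^esub>) \<in> Units R1 \<times> {\<zero>\<^bsub>R2\<^esub>}"
      using u by simp
  qed
  have iso: "\<phi> \<in> ring_iso R (RDirProd R1 R2)" using hom bij by (simp add: ring_iso_def)
  show ?thesis unfolding split_cond_def
    apply (rule exI[of _ R1], rule exI[of _ R2], rule exI[of _ \<phi>])
    using r1 r2 iso ex all by (intro conjI)
qed

lemma b_imp_a:
  fixes R :: "'a ring" and S :: "'a set"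
  assumes "cring R" and "S \<subseteq> carrier R" and "split_cond R S"
  shows "coprincipal R S"
proof -
  obtain R1 R2 :: "'a ring" and \<phi> where r1: "ring R1" and r2: "ring R2"
    and iso: "\<phi> \<in> ring_iso R (RDirProd R1 R2)"
    and ex: "\<exists>s\<in>S. \<phi> s \<in> Units R1 \<times> {\<zero>\<^bsub>R2\<^esub>}"
    and all: "\<forall>s\<in>S. \<phi> s \<otimes>\<^bsub>RDirProd R1 R2\<^esub> (\<one>\<^bsub>R1\<^esub>, \<zero>\<^bsub>R2\<^esub>) \<in> Units R1 \<times> {\<zero>\<^bsub>R2\<^esub>}"
    using assms(3) unfolding split_cond_def by (elim exE conjE) (rule that; assumption)
  interpret cring R by fact
  interpret A: ring R1 by fact
  interpret B: ring R2 by fact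
  have hom: "\<phi> \<in> ring_hom R (RDirProd R1 R2)" and bij: "bij_betw \<phi> (carrier R) (carrier (RDirProd R1 R2))"
    using iso by (auto simp: ring_iso_def)
  obtain s0 u where s0: "s0 \<in> S" "\<phi> s0 = (u, \<zero>\<^bsub>R2\<^esub>)" "u \<in> Units R1" using ex by blast
  have "\<forall>r\<in>S. \<exists>x\<in>carrier R. s0 = x \<otimes>\<^bsub>R\<^esub> r"
  proof
    fix r assume r: "r \<in> S"
    hence rc: "r \<in> carrier R" using assms(2) by auto
    obtain r1 r2 where pr: "\<phi> r = (r1, r2)" by (cases "\<phi> r")
    have "\<phi> r \<in> carrier (RDirProd R1 R2)" using hom rc by (rule ring_hom_closed)
    hence r12: "r1 \<in> carrier R1" "r2 \<in> carrier R2" using pr by (auto simp: RDirProd_carrier)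
    have "\<phi> r \<otimes>\<^bsub>RDirProd R1 R2\<^esub> (\<one>\<^bsub>R1\<^esub>, \<zero>\<^bsub>R2\<^esub>) = (r1, \<zero>\<^bsub>R2\<^esub>)"
      using r12 by (simp add: pr RDP_mult)
    hence v: "r1 \<in> Units R1" using all r by auto
    define w where "w = (u \<otimes>\<^bsub>R1\<^esub> inv\<^bsub>R1\<^esub> r1, \<zero>\<^bsub>R2\<^esub>)"
    have wc: "w \<in> carrier (RDirProd R1 R2)" using v s0(3) by (simp add: w_def RDirProd_carrier A.Units_closed A.Units_inv_closed)
    have "w \<in> \<phi> ` carrier R" using wc bij_betw_imp_surj_on[OF bij] by simp
    then obtain x where x: "x \<in> carrier R" "\<phi> x = w" by (elim imageE) simp
    have "\<phi> (x \<otimes>\<^bsub>R\<^esub> r) = \<phi> x \<otimes>\<^bsub>RDirProd R1 R2\<^esub> \<phi> r" using hom x(1) rc by (rule ring_hom_mult)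
    also have "\<dots> = (u, \<zero>\<^bsub>R2\<^esub>)"
    proof -
      have uc: "u \<in> carrier R1" using s0(3) by (rule A.Units_closed)
      have ic: "inv\<^bsub>R1\<^esub> r1 \<in> carrier R1" using v by (rule A.Units_inv_closed)
      have "u \<otimes>\<^bsub>R1\<^esub> inv\<^bsub>R1\<^esub> r1 \<otimes>\<^bsub>R1\<^esub> r1 = u \<otimes>\<^bsub>R1\<^esub> (inv\<^bsub>R1\<^esub> r1 \<otimes>\<^bsub>R1\<^esub> r1)"
        using uc ic r12(1) by (rule A.m_assoc)
      also have "\<dots> = u" using A.Units_l_inv[OF v] uc by simp
      finally have 1: "u \<otimes>\<^bsub>R1\<^esub> inv\<^bsub>R1\<^esub> r1 \<otimes>\<^bsub>R1\<^esub> r1 = u" .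
      have 2: "\<zero>\<^bsub>R2\<^esub> \<otimes>\<^bsub>R2\<^esub> r2 = \<zero>\<^bsub>R2\<^esub>" using r12(2) by (rule B.l_null)
      show ?thesis unfolding x(2) w_def pr RDP_mult 1 2 ..
    qed
    finally have "\<phi> (x \<otimes>\<^bsub>R\<^esub> r) = \<phi> s0" using s0 by simp
    moreover have "s0 \<in> carrier R" using s0 assms(2) by auto
    moreover have "x \<otimes>\<^bsub>R\<^esub> r \<in> carrier R" using x(1) rc by simp
    ultimately have "s0 = x \<otimes>\<^bsub>R\<^esub> r" using bij_betw_imp_inj_on[OF bij] by (simp add: inj_on_def)
    thus "\<exists>x\<in>carrier R. s0 = x \<otimes>\<^bsub>R\<^esub> r" using x by blast
  qed
  thus ?thesis unfolding coprincipal_def using s0 by blast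
qed

theorem lemma3p14:
  fixes R :: "'a ring" and S :: "'a set"
  assumes "cring R" and "S \<subseteq> carrier R"
  shows "(split_cond R S \<longrightarrow> coprincipal R S) \<and>
         (mult_closed R S \<longrightarrow> coprincipal R S \<longrightarrow> split_cond R S)"
proof (intro conjI impI)
  assume "split_cond R S"
  thus "coprincipal R S" by (rule b_imp_a[OF assms])
next
  assume "mult_closed R S" "coprincipal R S"
  thus "split_cond R S" by (rule cring.a_imp_b[OF assms])
qed

end
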